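(* Suppose the agent is risk neutral ($v$ is the identity) and not protected by limited liability (transfers may be any real numbers). Then every $F\in\mathcal{F}(\mu)$ with $\operatorname{supp}(F)\subseteq\operatorname{int}\Delta(\Theta)$ can be implemented efficiently, i.e. at expected cost to the principal equal to $C(F)+v_0$.
   Context: Let $\Theta=\{\theta_1,\dots,\theta_n\}$ be a finite set of states and $\mu\in\Delta(\Theta)$ a full-support prior; a belief $\mathbf{x}$ has entries $x^k$ = probability of $\theta_k$. $\mathcal{F}(\mu)$ is the set of Bayes-plausible distributions over posteriors (probability measures on $\Delta(\Theta)$ with barycenter $\mu$). Acquiring $F$ costs $C(F)=\kappa\int c\,dF$, $\kappa>0$, $c:\Delta(\Theta)\to\mathbb{R}_+$ strictly convex, twice continuously differentiable, bounded on the interior of $\Delta(\Theta)$, $c(\mu)=0$. A contract $(M,t)$: compact message set $M$ and transfer $t:M\times\Theta\to\mathbb{R}$ (paid in money equal to utils, since the agent is risk neutral). The agent has outside option $v_0\ge 0$. Timing: the principal offers $(M,t)$; the agent rejects (getting $v_0$) or accepts, chooses any $G\in\mathcal{F}(\mu)$ paying $C(G)$, privately observes a posterior $\mathbf{x}\sim G$, then walks away (getting $v_0$) or sends $d\in M$ and receives $t(d,\theta)$ in realized state $\theta$. $N(\mathbf{x}\mid d)=\sum_k x^k t(d,\theta_k)-\kappa c(\mathbf{x})$. $(M,t)$ implements $F$ if $M=\operatorname{supp}(F)$ and "accept, acquire $F$, send the realized posterior $\mathbf{x}$ as message" is optimal for the agent among all strategies (rejecting; or accepting, acquiring any $G$,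 and at each posterior sending any possibly randomized message or walking away). The principal's expected cost is $\int\sum_k x^k t(\mathbf{x},\theta_k)\,dF(\mathbf{x})$. $F$ is implemented efficiently if it is implemented at the first-best cost, which for a risk-neutral agent is $C(F)+v_0$. *)

theory Defs
  imports "HOL-Analysis.Analysis" "HOL-Probability.Probability"
begin

text \<open>States are the elements of a finite type 's; a belief is a vector x :: real^'s
  whose component x$k is the probability of state k.\<close>

definition belief_simplex :: "(real^'s::finite) set" where
  "belief_simplex = {x. (\<forall>k. 0 \<le> x$k) \<and> (\<Sum>k\<in>UNIV. x$k) = 1}"

definition belief_int :: "(real^'s::finite) set" where
  "belief_int = {x. (\<forall>k. 0 < x$k) \<and> (\<Sum>k\<in>UNIV. x$k) = 1}"

definition strictly_convex_on :: "'a::real_vector set \<Rightarrow> ('a \<Rightarrow> real) \<Rightarrow> bool" where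
  "strictly_convex_on S f \<longleftrightarrow>
     (\<forall>x\<in>S. \<forall>y\<in>S. \<forall>u::real. x \<noteq> y \<longrightarrow> 0 < u \<longrightarrow> u < 1 \<longrightarrow>
        f (u *\<^sub>R x + (1 - u) *\<^sub>R y) < u * f x + (1 - u) * f y)"

definition C2_on :: "'a::euclidean_space set \<Rightarrow> ('a \<Rightarrow> real) \<Rightarrow> bool" where
  "C2_on U f \<longleftrightarrow>
     (\<exists>D D2. (\<forall>x\<in>U. (f has_derivative blinfun_apply (D x)) (at x)) \<and>
             (\<forall>x\<in>U. (D has_derivative blinfun_apply (D2 x)) (at x)) \<and>
             continuous_on U D2)"

definition C2_on_simplex_int :: "(real^'s::finite \<Rightarrow> real) \<Rightarrow> bool" where
  "C2_on_simplex_int c \<longleftrightarrow>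
     (\<exists>U g. open U \<and> belief_int \<subseteq> U \<and> C2_on U g \<and> (\<forall>x\<in>belief_int. g x = c x))"

definition measure_support :: "'a::topological_space measure \<Rightarrow> 'a set" where
  "measure_support F = {x. \<forall>U. open U \<longrightarrow> x \<in> U \<longrightarrow> emeasure F U > 0}"

definition bayes_plausible :: "real^'s::finite \<Rightarrow> (real^'s) measure \<Rightarrow> bool" where
  "bayes_plausible mu F \<longleftrightarrow>
     sets F = sets borel \<and> prob_space F \<and> emeasure F belief_simplex = 1 \<and>
     integral\<^sup>L F (\<lambda>x. x) = mu"

definition info_cost :: "real \<Rightarrow> (real^'s::finite \<Rightarrow> real) \<Rightarrow> (real^'s) measure \<Rightarrow> real" where
  "info_cost kappa c F = kappa * integral\<^sup>L F c"

definition exp_transfer :: "(real^'s::finite \<Rightarrow> 's \<Rightarrow> real) \<Rightarrow> real^'s \<Rightarrow> real^'s \<Rightarrow> real" where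
  "exp_transfer t x d = (\<Sum>k\<in>UNIV. x$k * t d k)"

text \<open>Agent's payoff from accepting, acquiring G and using the (possibly randomised)
  reporting rule K: at posterior x, K x is a sub-probability measure on the message set
  Ms; the missing mass 1 - K x (Ms) is the probability of walking away (payoff v0).\<close>
definition deviation_payoff ::
  "real \<Rightarrow> (real^'s::finite \<Rightarrow> real) \<Rightarrow> real \<Rightarrow> (real^'s) set \<Rightarrow> (real^'s \<Rightarrow> 's \<Rightarrow> real)
    \<Rightarrow> (real^'s) measure \<Rightarrow> (real^'s \<Rightarrow> (real^'s) measure) \<Rightarrow> real" where
  "deviation_payoff kappa c v0 Ms t G K =
     (\<integral>x. (\<integral>d. exp_transfer t x d \<partial>(K x)) + (1 - measure (K x) Ms) * v0 \<partial>G)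
     - info_cost kappa c G"

definition truthful_payoff ::
  "real \<Rightarrow> (real^'s::finite \<Rightarrow> real) \<Rightarrow> (real^'s \<Rightarrow> 's \<Rightarrow> real) \<Rightarrow> (real^'s) measure \<Rightarrow> real" where
  "truthful_payoff kappa c t F = (\<integral>x. exp_transfer t x x \<partial>F) - info_cost kappa c F"

definition principal_cost :: "(real^'s::finite \<Rightarrow> 's \<Rightarrow> real) \<Rightarrow> (real^'s) measure \<Rightarrow> real" where
  "principal_cost t F = (\<integral>x. exp_transfer t x x \<partial>F)"

text \<open>Transfers are required to be bounded on Ms and
  Borel measurable, so that all payoffs are well defined.  Deviations range over all
  Bayes-plausible G with integrable cost (others have infinite or undefined cost) and all
  measurable randomised reporting/walk-away rules.\<close>
definition implements ::
  "real^'s::finite \<Rightarrow> real \<Rightarrow> (real^'s \<Rightarrow> real) \<Rightarrow> real \<Rightarrow> (real^'s) set \<Rightarrow> (real^'s \<Rightarrow> 's \<Rightarrow> real)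
    \<Rightarrow> (real^'s) measure \<Rightarrow> bool" where
  "implements mu kappa c v0 Ms t F \<longleftrightarrow>
     Ms = measure_support F \<and> compact Ms \<and>
     (\<forall>k. (\<lambda>d. t d k) \<in> borel_measurable borel \<and> bounded ((\<lambda>d. t d k) ` Ms)) \<and>
     v0 \<le> truthful_payoff kappa c t F \<and>
     (\<forall>G K. bayes_plausible mu G \<longrightarrow> integrable G c \<longrightarrow>
        K \<in> measurable G (subprob_algebra (restrict_space borel Ms)) \<longrightarrow>
        deviation_payoff kappa c v0 Ms t G K \<le> truthful_payoff kappa c t F)"

end

theory Submission
  imports Defs
begin

lemma support_props:
  fixes F :: "'a::second_countable_topology measure"
  assumes sF: "sets F = sets borel"
  shows "closed (measure_support F)" and "AE x in F. x \<in> measure_support F"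
proof -
  have comp: "- measure_support F = \<Union>{U. open U \<and> emeasure F U = 0}"
    unfolding measure_support_def by (auto simp: not_less)
  show "closed (measure_support F)"
    unfolding closed_def comp by (rule open_Union) auto
  obtain B :: "'a set set" where B: "countable B" "topological_basis B"
    using ex_countable_basis by blast
  have bo: "\<And>b. b \<in> B \<Longrightarrow> open b" using B(2) by (simp add: topological_basis_def)
  have sub: "- measure_support F \<subseteq> (\<Union>b\<in>{b\<in>B. emeasure F b = 0}. b)"
  proof
    fix x assume "x \<in> - measure_support F"
    then obtain U where U: "open U" "x \<in> U" "emeasure F U = 0" using comp by auto
    then obtain b where b: "b \<in> B" "x \<in> b" "b \<subseteq> U"
      using topological_basisE[OF B(2) U(1) U(2)] by blast
    have "emeasure F b \<le> emeasure F U"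
      by (rule emeasure_mono) (use b U sF bo in auto)
    then show "x \<in> (\<Union>b\<in>{b\<in>B. emeasure F b = 0}. b)" using b U by auto
  qed
  have "(\<Union>b\<in>{b\<in>B. emeasure F b = 0}. b) \<in> null_sets F"
    by (rule null_sets_UN') (use B(1) sF bo in auto)
  then show "AE x in F. x \<in> measure_support F"
    by (rule AE_I') (use sub in auto)
qed

lemma int_sub_simplex: "belief_int \<subseteq> belief_simplex"
  unfolding belief_int_def belief_simplex_def by (auto intro: less_imp_le)

lemma seg_in_int:
  fixes d x :: "real^'s::finite"
  assumes d: "d \<in> belief_int" and x: "x \<in> belief_simplex" and s: "0 < s" "s < 1"
  shows "d + s *\<^sub>R (x - d) \<in> belief_int"
proof -
  have eq: "d + s *\<^sub>R (x - d) = s *\<^sub>R x + (1 - s) *\<^sub>R d" by (simp add: algebra_simps)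
  have "0 < (s *\<^sub>R x + (1 - s) *\<^sub>R d) $ k" for k
  proof -
    have "0 \<le> s * x$k" using x s unfolding belief_simplex_def by simp
    moreover have "0 < (1 - s) * d$k" using d s unfolding belief_int_def by simp
    ultimately show ?thesis by simp
  qed
  moreover have "(\<Sum>k\<in>UNIV. (s *\<^sub>R x + (1 - s) *\<^sub>R d) $ k) = 1"
    using x d unfolding belief_simplex_def belief_int_def
    by (simp add: sum.distrib sum_distrib_left[symmetric])
  ultimately show ?thesis unfolding eq belief_int_def by auto
qed

lemma tangent:
  fixes c g :: "real^'s::finite \<Rightarrow> real"
  assumes c_strict: "strictly_convex_on belief_simplex c"
    and gc: "\<forall>x\<in>belief_int. g x = c x"
    and dg: "(g has_derivative blinfun_apply L) (at d)"
    and d: "d \<in> belief_int" and x: "x \<in> belief_simplex"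
  shows "c d + blinfun_apply L (x - d) \<le> c x"
proof -
  define \<phi> where "\<phi> s = g (d + s *\<^sub>R (x - d))" for s :: real
  have lin: "((\<lambda>s::real. d + s *\<^sub>R (x - d)) has_derivative (\<lambda>s. s *\<^sub>R (x - d))) (at 0)"
    by (auto intro!: derivative_eq_intros)
  have "(\<phi> has_derivative (\<lambda>s. blinfun_apply L (s *\<^sub>R (x - d)))) (at 0)"
    unfolding \<phi>_def using has_derivative_compose[OF lin, of g] dg by simp
  then have "(\<phi> has_derivative (\<lambda>s. blinfun_apply L (x - d) * s)) (at 0)"
    by (simp add: blinfun.scaleR_right mult.commute)
  then have "(\<phi> has_real_derivative blinfun_apply L (x - d)) (at 0)"
    by (simp add: has_field_derivative_def)
  then have "((\<lambda>s. (\<phi> s - \<phi> 0) / (s - 0)) \<longlongrightarrow> blinfun_apply L (x - d)) (at 0)"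
    by (simp add: has_field_derivative_iff)
  then have lim: "((\<lambda>s. (\<phi> s - \<phi> 0) / s) \<longlongrightarrow> blinfun_apply L (x - d)) (at_right 0)"
    by (simp add: filterlim_at_split)
  have ev: "eventually (\<lambda>s. (\<phi> s - \<phi> 0) / s \<le> c x - c d) (at_right (0::real))"
    unfolding eventually_at_right_field
  proof (intro exI[of _ 1] conjI allI impI)
    fix s :: real assume s0: "0 < s" and s1: "s < 1"
    note s = s0 s1
    have p: "d + s *\<^sub>R (x - d) \<in> belief_int" using seg_in_int[OF d x] s by auto
    have "c (d + s *\<^sub>R (x - d)) \<le> s * c x + (1 - s) * c d"
    proof (cases "x = d")
      case True then show ?thesis by (simp add: algebra_simps)
    next
      case False
      have "d \<in> belief_simplex" using d int_sub_simplex by auto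
      then have "c (s *\<^sub>R x + (1 - s) *\<^sub>R d) < s * c x + (1 - s) * c d"
        using c_strict False x s unfolding strictly_convex_on_def by auto
      moreover have "d + s *\<^sub>R (x - d) = s *\<^sub>R x + (1 - s) *\<^sub>R d" by (simp add: algebra_simps)
      ultimately show ?thesis by simp
    qed
    moreover have "\<phi> s = c (d + s *\<^sub>R (x - d))" "\<phi> 0 = c d" using gc p d by (auto simp: \<phi>_def)
    ultimately have "\<phi> s - \<phi> 0 \<le> s * (c x - c d)" by (simp add: algebra_simps)
    then show "(\<phi> s - \<phi> 0) / s \<le> c x - c d" using s by (simp add: divide_le_eq mult.commute)
  qed simp
  have "blinfun_apply L (x - d) \<le> c x - c d"
    by (rule tendsto_upperbound[OF lim ev]) simp
  then show ?thesis by simp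
qed

lemma bp_facts:
  fixes G :: "(real^'s::finite) measure"
  assumes "bayes_plausible mu G"
  shows "prob_space G" "sets G = sets borel" "space G = UNIV" "AE x in G. x \<in> belief_simplex"
proof -
  show pG: "prob_space G" and sG: "sets G = sets borel" using assms by (auto simp: bayes_plausible_def)
  show "space G = UNIV" using sets_eq_imp_space_eq[OF sG] by simp
  have "measure G belief_simplex = 1" using assms by (auto simp: bayes_plausible_def measure_def)
  then show "AE x in G. x \<in> belief_simplex" using prob_space.AE_prob_1[OF pG] by blast
qed

lemma exp_transfer_tangent:
  fixes x d :: "real^'s::finite"
  assumes "(\<Sum>k\<in>UNIV. x$k) = 1"
  shows "exp_transfer (\<lambda>d k. kappa * (a d + blinfun_apply (B d) (axis k 1 - d)) + v0) x d
       = kappa * (a d + blinfun_apply (B d) (x - d)) + v0"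
proof -
  have e: "(\<Sum>k\<in>UNIV. x$k *\<^sub>R (axis k 1 - d)) = x - d"
  proof -
    have "(\<Sum>k\<in>UNIV. x$k *\<^sub>R (axis k 1 - d)) = (\<Sum>k\<in>UNIV. x$k *\<^sub>R axis k 1) - (\<Sum>k\<in>UNIV. x$k) *\<^sub>R d"
      by (simp add: scaleR_diff_right sum_subtractf scaleR_sum_left)
    also have "(\<Sum>k\<in>UNIV. x$k *\<^sub>R axis k 1) = x"
      using basis_expansion[of x] by (simp add: scalar_mult_eq_scaleR)
    finally show ?thesis using assms by simp
  qed
  have "exp_transfer (\<lambda>d k. kappa * (a d + blinfun_apply (B d) (axis k 1 - d)) + v0) x d
     = (\<Sum>k\<in>UNIV. x$k) * (kappa * a d + v0) + kappa * (\<Sum>k\<in>UNIV. x$k * blinfun_apply (B d) (axis k 1 - d))"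
    unfolding exp_transfer_def
    by (simp add: algebra_simps sum.distrib sum_distrib_left sum_distrib_right)
  also have "(\<Sum>k\<in>UNIV. x$k * blinfun_apply (B d) (axis k 1 - d)) = blinfun_apply (B d) (x - d)"
    unfolding e[symmetric] by (simp add: blinfun.sum_right blinfun.scaleR_right)
  finally show ?thesis using assms by (simp add: algebra_simps)
qed

lemma deviation_bound:
  fixes G :: "(real^'s::finite) measure" and c :: "real^'s \<Rightarrow> real"
  assumes bp: "bayes_plausible mu G" and intc: "integrable G c"
    and K: "K \<in> measurable G (subprob_algebra (restrict_space borel Ms))"
    and c_nonneg: "\<forall>x\<in>belief_simplex. c x \<ge> 0" and v0: "v0 \<ge> 0" and kappa: "kappa > 0"
    and bound: "\<forall>x\<in>belief_simplex. \<forall>d\<in>Ms. exp_transfer t x d \<le> kappa * c x + v0"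
  shows "deviation_payoff kappa c v0 Ms t G K \<le> v0"
proof -
  note G = bp_facts[OF bp]
  interpret pG: prob_space G by (rule G(1))
  define f1 where "f1 x = (\<integral>d. exp_transfer t x d \<partial>(K x)) + (1 - measure (K x) Ms) * v0" for x
  have pt: "f1 x \<le> kappa * c x + v0" if x: "x \<in> belief_simplex" for x
  proof -
    have "K x \<in> space (subprob_algebra (restrict_space borel Ms))"
      using measurable_space[OF K] G(3) by auto
    then have sp: "subprob_space (K x)" and sK: "sets (K x) = sets (restrict_space borel Ms)"
      by (auto simp: space_subprob_algebra)
    interpret sK: subprob_space "K x" by (rule sp)
    have spK: "space (K x) = Ms" using sets_eq_imp_space_eq[OF sK] by (simp add: space_restrict_space)
    define m where "m = measure (K x) Ms"
    have m01: "0 \<le> m" "m \<le> 1" unfolding m_def using sK.subprob_measure_le_1 by auto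
    have cx: "0 \<le> c x" using c_nonneg x by auto
    have inner: "(\<integral>d. exp_transfer t x d \<partial>(K x)) \<le> (kappa * c x + v0) * m"
    proof (cases "integrable (K x) (exp_transfer t x)")
      case True
      have "(\<integral>d. exp_transfer t x d \<partial>(K x)) \<le> (\<integral>d. (kappa * c x + v0) \<partial>(K x))"
        by (rule integral_mono[OF True]) (use bound x spK in auto)
      also have "\<dots> = (kappa * c x + v0) * m" using spK by (simp add: m_def)
      finally show ?thesis .
    next
      case False
      then show ?thesis using m01 cx kappa v0 by (simp add: not_integrable_integral_eq)
    qed
    have "f1 x \<le> (kappa * c x + v0) * m + (1 - m) * v0" using inner by (simp add: f1_def m_def)
    also have "\<dots> = kappa * c x * m + v0" by (simp add: algebra_simps)
    also have "\<dots> \<le> kappa * c x + v0"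
      using mult_left_le[OF m01(2), of "kappa * c x"] cx kappa by simp
    finally show ?thesis .
  qed
  have AEs: "AE x in G. x \<in> belief_simplex" by (rule G(4))
  have rhs: "(\<integral>x. kappa * c x + v0 \<partial>G) = kappa * integral\<^sup>L G c + v0"
    using intc by (simp add: pG.prob_space)
  have cnn: "0 \<le> integral\<^sup>L G c"
    by (rule integral_nonneg_AE) (use AEs c_nonneg in auto)
  have "integral\<^sup>L G f1 \<le> kappa * integral\<^sup>L G c + v0"
  proof (cases "integrable G f1")
    case True
    have "integral\<^sup>L G f1 \<le> (\<integral>x. kappa * c x + v0 \<partial>G)"
      by (rule integral_mono_AE[OF True]) (use intc pt AEs in auto)
    then show ?thesis using rhs by simp
  next
    case False
    then show ?thesis using cnn kappa v0 by (simp add: not_integrable_integral_eq)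
  qed
  then show ?thesis
    unfolding deviation_payoff_def info_cost_def f1_def[symmetric] by simp
qed

lemma simplex_closed: "closed (belief_simplex :: (real^'s::finite) set)"
  unfolding belief_simplex_def
  by (intro closed_Collect_conj closed_Collect_all closed_Collect_le closed_Collect_eq continuous_intros)

lemma int_bounded: "bounded (belief_int :: (real^'s::finite) set)"
proof -
  have "norm x \<le> 1" if "x \<in> belief_int" for x :: "real^'s"
  proof -
    have "norm x \<le> (\<Sum>i\<in>UNIV. \<bar>x$i\<bar>)" by (rule norm_le_l1_cart)
    also have "\<dots> = (\<Sum>i\<in>UNIV. x$i)" using that unfolding belief_int_def by (simp add: less_imp_le)
    finally show ?thesis using that unfolding belief_int_def by simp
  qed
  then show ?thesis unfolding bounded_iff by blast
qed

theorem proposition2: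
  fixes mu :: "real^'s::finite"
    and kappa v0 :: real
    and c :: "real^'s \<Rightarrow> real"
    and F :: "(real^'s) measure"
  assumes mu_int: "mu \<in> belief_int"
    and kappa_pos: "kappa > 0"
    and v0_nonneg: "v0 \<ge> 0"
    and c_nonneg: "\<forall>x\<in>belief_simplex. c x \<ge> 0"
    and c_strict: "strictly_convex_on belief_simplex c"
    and c_C2: "C2_on_simplex_int c"
    and c_bounded: "bounded (c ` belief_int)"
    and c_mu: "c mu = 0"
    and F_bp: "bayes_plausible mu F"
    and F_supp: "measure_support F \<subseteq> belief_int"
  shows "\<exists>Ms t. implements mu kappa c v0 Ms t F \<and>
                principal_cost t F = info_cost kappa c F + v0"
proof -
  note Ff = bp_facts[OF F_bp]
  interpret pF: prob_space F by (rule Ff(1))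
  define Ms where "Ms = measure_support F"
  have Ms_closed: "closed Ms" and AEMs: "AE x in F. x \<in> Ms"
    using support_props[OF Ff(2)] by (auto simp: Ms_def)
  have Ms_int: "Ms \<subseteq> belief_int" using F_supp by (simp add: Ms_def)
  have Ms_comp: "compact Ms"
    using Ms_closed bounded_subset[OF int_bounded Ms_int] by (simp add: compact_eq_bounded_closed)
  have Ms_borel: "Ms \<in> sets borel" using Ms_closed by simp
  have AEsum: "AE x in F. (\<Sum>k\<in>UNIV. x$k) = 1"
    using Ff(4) by eventually_elim (auto simp: belief_simplex_def)
  show ?thesis
  proof (cases "c \<in> borel_measurable borel")
    case False
    define t where "t = (\<lambda>(d::real^'s) (k::'s). v0)"
    have cF: "\<not> integrable F c"
      using False measurable_cong_sets[OF Ff(2) refl] by auto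
    have pc: "principal_cost t F = v0"
    proof -
      have "principal_cost t F = (\<integral>x. v0 \<partial>F)"
        unfolding principal_cost_def exp_transfer_def t_def
      proof (rule integral_cong_AE)
        show "AE x in F. (\<Sum>k\<in>UNIV. x $ k * v0) = v0"
          using AEsum by eventually_elim (simp add: sum_distrib_right[symmetric])
      qed (auto simp: measurable_cong_sets[OF Ff(2) refl])
      then show ?thesis by (simp add: pF.prob_space)
    qed
    have "implements mu kappa c v0 Ms t F"
      unfolding implements_def
    proof (intro conjI allI impI)
      show "Ms = measure_support F" by (simp add: Ms_def)
      show "compact Ms" by (rule Ms_comp)
    next
      fix k show "(\<lambda>d. t d k) \<in> borel_measurable borel" by (simp add: t_def)
    next
      fix k show "bounded ((\<lambda>d. t d k) ` Ms)" by (rule bounded_subset[of "{v0}"]) (auto simp: t_def)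
    next
      show "v0 \<le> truthful_payoff kappa c t F"
        using pc cF unfolding truthful_payoff_def principal_cost_def info_cost_def
        by (simp add: not_integrable_integral_eq)
    next
      fix G K assume "bayes_plausible mu G" "integrable G c"
      then have False using False measurable_cong_sets[OF bp_facts(2) refl] by blast
      then show "deviation_payoff kappa c v0 Ms t G K \<le> truthful_payoff kappa c t F" ..
    qed
    moreover have "principal_cost t F = info_cost kappa c F + v0"
      using pc cF by (simp add: info_cost_def not_integrable_integral_eq)
    ultimately show ?thesis by blast
  next
    case True
    obtain U g where U: "open U" "belief_int \<subseteq> U" "C2_on U g" and gc: "\<forall>x\<in>belief_int. g x = c x"
      using c_C2 unfolding C2_on_simplex_int_def by blast
    obtain D D2 where Dg: "\<forall>x\<in>U. (g has_derivative blinfun_apply (D x)) (at x)"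
      and DD: "\<forall>x\<in>U. (D has_derivative blinfun_apply (D2 x)) (at x)"
      using U(3) unfolding C2_on_def by blast
    have g_cont: "continuous_on U g"
      using Dg by (intro continuous_at_imp_continuous_on) (auto dest: has_derivative_continuous)
    have D_cont: "continuous_on U D"
      using DD by (intro continuous_at_imp_continuous_on) (auto dest: has_derivative_continuous)
    have MsU: "Ms \<subseteq> U" using Ms_int U(2) by auto
    define t0 where "t0 = (\<lambda>d (k::'s). kappa * (g d + blinfun_apply (D d) (axis k 1 - d)) + v0)"
    define t where "t = (\<lambda>d k. if d \<in> Ms then t0 d k else 0)"
    have t0_cont: "continuous_on Ms (\<lambda>d. t0 d k)" for k
    proof -
      have "continuous_on U (\<lambda>d. t0 d k)"
        unfolding t0_def
        by (intro continuous_intros g_cont blinfun.continuous_on D_cont)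
      then show ?thesis using continuous_on_subset MsU by blast
    qed
    have t_meas: "(\<lambda>d. t d k) \<in> borel_measurable borel" for k
      unfolding t_def
      by (rule borel_measurable_continuous_on_if[OF Ms_borel t0_cont]) simp
    have t_bd: "bounded ((\<lambda>d. t d k) ` Ms)" for k
    proof -
      have "(\<lambda>d. t d k) ` Ms = (\<lambda>d. t0 d k) ` Ms" by (auto simp: t_def)
      then show ?thesis
        using compact_imp_bounded[OF compact_continuous_image[OF t0_cont Ms_comp]] by simp
    qed
    have et: "exp_transfer t x d = kappa * (g d + blinfun_apply (D d) (x - d)) + v0"
      if "d \<in> Ms" "(\<Sum>k\<in>UNIV. x$k) = 1" for x d :: "real^'s"
    proof -
      have "exp_transfer t x d = exp_transfer t0 x d"
        using that(1) by (simp add: exp_transfer_def t_def)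
      then show ?thesis unfolding t0_def using exp_transfer_tangent[OF that(2)] by simp
    qed
    have bound: "\<forall>x\<in>belief_simplex. \<forall>d\<in>Ms. exp_transfer t x d \<le> kappa * c x + v0"
    proof (intro ballI)
      fix x d :: "real^'s" assume x: "x \<in> belief_simplex" and d: "d \<in> Ms"
      have dI: "d \<in> belief_int" using d Ms_int by auto
      have tan: "c d + blinfun_apply (D d) (x - d) \<le> c x"
        by (rule tangent[OF c_strict gc]) (use Dg dI U(2) x in auto)
      have "exp_transfer t x d = kappa * (c d + blinfun_apply (D d) (x - d)) + v0"
        using et[OF d] x gc dI by (auto simp: belief_simplex_def)
      also have "\<dots> \<le> kappa * c x + v0" using tan kappa_pos by simp
      finally show "exp_transfer t x d \<le> kappa * c x + v0" .
    qed
    have cmeasF: "c \<in> borel_measurable F" using True measurable_cong_sets[OF Ff(2) refl] by auto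
    obtain Bc where Bc: "\<forall>x\<in>belief_int. norm (c x) \<le> Bc"
      using c_bounded unfolding bounded_iff by auto
    have intcF: "integrable F c"
    proof (rule pF.integrable_const_bound[OF _ cmeasF])
      show "AE x in F. norm (c x) \<le> Bc" using AEMs by eventually_elim (use Bc Ms_int in auto)
    qed
    have pc: "principal_cost t F = kappa * integral\<^sup>L F c + v0"
    proof -
      have "principal_cost t F = (\<integral>x. kappa * c x + v0 \<partial>F)"
        unfolding principal_cost_def
      proof (rule integral_cong_AE)
        show "AE x in F. exp_transfer t x x = kappa * c x + v0"
          using AEMs AEsum by eventually_elim (use et gc Ms_int in auto)
        show "(\<lambda>x. exp_transfer t x x) \<in> borel_measurable F"
          unfolding exp_transfer_def measurable_cong_sets[OF Ff(2) refl]
          using t_meas by measurable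
        show "(\<lambda>x. kappa * c x + v0) \<in> borel_measurable F"
          using cmeasF by measurable
      qed
      then show ?thesis using intcF by (simp add: pF.prob_space)
    qed
    have "implements mu kappa c v0 Ms t F"
      unfolding implements_def
    proof (intro conjI allI impI)
      show "Ms = measure_support F" by (simp add: Ms_def)
      show "compact Ms" by (rule Ms_comp)
    next
      fix k show "(\<lambda>d. t d k) \<in> borel_measurable borel" by (rule t_meas)
    next
      fix k show "bounded ((\<lambda>d. t d k) ` Ms)" by (rule t_bd)
    next
      show "v0 \<le> truthful_payoff kappa c t F"
        using pc unfolding truthful_payoff_def principal_cost_def info_cost_def by simp
    next
      fix G K assume G: "bayes_plausible mu G" "integrable G c"
        "K \<in> measurable G (subprob_algebra (restrict_space borel Ms))"
      have "deviation_payoff kappa c v0 Ms t G K \<le> v0"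
        by (rule deviation_bound[OF G c_nonneg v0_nonneg kappa_pos bound])
      also have "v0 = truthful_payoff kappa c t F"
        using pc unfolding truthful_payoff_def principal_cost_def info_cost_def by simp
      finally show "deviation_payoff kappa c v0 Ms t G K \<le> truthful_payoff kappa c t F" .
    qed
    moreover have "principal_cost t F = info_cost kappa c F + v0"
      using pc by (simp add: info_cost_def)
    ultimately show ?thesis by blast
  qed
qed

end
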